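(* Let $\mathbb{K}$ be a field and $R=\mathbb{K}\langle x,y\rangle/(xy-1)$. Every left ideal of $R$ is of the form $\Sigma\oplus Rp(x)$, where $p(x)\in\mathbb{K}[x]\subseteq R$ is a polynomial in $x$ and $\Sigma$ is a left ideal of $R$ contained in the socle $I$ of $R$.
   Context: $R$ has $\mathbb{K}$-basis $\{y^ix^j: i,j\ge 0\}$. The socle of $R$ (as a left module) is the two-sided ideal $I=\langle 1-yx\rangle$; it equals $\bigoplus_{n\ge1}S_n$ where $S_n=Rf_n$ with $f_n=y^{n-1}x^{n-1}-y^nx^n$, and each $S_n$ is a simple left $R$-module isomorphic to $S_1$. *)

theory Defs
  imports "HOL-Computational_Algebra.Polynomial"
begin

text \<open>The Jacobson algebra R = K<x,y>/(xy - 1), realised on its K-basis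
  y^i x^j (indexed by the pair (i,j)). An element of R is a finitely supported
  function from basis indices to K.\<close>

definition jsupp :: "(nat \<times> nat \<Rightarrow> 'k::field) \<Rightarrow> (nat \<times> nat) set" where
  "jsupp f = {m. f m \<noteq> 0}"

definition Jcarrier :: "(nat \<times> nat \<Rightarrow> 'k::field) set" where
  "Jcarrier = {f. finite (jsupp f)}"

text \<open>Product of basis monomials: (y^i x^j)(y^k x^l), using x y = 1.\<close>
definition bmul :: "nat \<times> nat \<Rightarrow> nat \<times> nat \<Rightarrow> nat \<times> nat" where
  "bmul m n = (case m of (i, j) \<Rightarrow> case n of (k, l) \<Rightarrow>
      if j \<le> k then (i + k - j, l) else (i, l + j - k))"

definition jzero :: "nat \<times> nat \<Rightarrow> 'k::field" where
  "jzero = (\<lambda>_. 0)"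

definition jadd :: "(nat \<times> nat \<Rightarrow> 'k::field) \<Rightarrow> (nat \<times> nat \<Rightarrow> 'k) \<Rightarrow> (nat \<times> nat \<Rightarrow> 'k)" where
  "jadd f g = (\<lambda>m. f m + g m)"

definition jmul :: "(nat \<times> nat \<Rightarrow> 'k::field) \<Rightarrow> (nat \<times> nat \<Rightarrow> 'k) \<Rightarrow> (nat \<times> nat \<Rightarrow> 'k)" where
  "jmul f g = (\<lambda>a. \<Sum>(m, n) \<in> {(m, n). m \<in> jsupp f \<and> n \<in> jsupp g \<and> bmul m n = a}. f m * g n)"

definition left_ideal :: "(nat \<times> nat \<Rightarrow> 'k::field) set \<Rightarrow> bool" where
  "left_ideal L \<longleftrightarrow> L \<subseteq> Jcarrier \<and> jzero \<in> L \<and>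
     (\<forall>a\<in>L. \<forall>b\<in>L. jadd a b \<in> L) \<and>
     (\<forall>r\<in>Jcarrier. \<forall>a\<in>L. jmul r a \<in> L)"

definition minimal_left_ideal :: "(nat \<times> nat \<Rightarrow> 'k::field) set \<Rightarrow> bool" where
  "minimal_left_ideal L \<longleftrightarrow> left_ideal L \<and> L \<noteq> {jzero} \<and>
     (\<forall>L'. left_ideal L' \<and> L' \<subseteq> L \<longrightarrow> L' = {jzero} \<or> L' = L)"

text \<open>Socle of R as a left module: the sum of all minimal left ideals
  (= smallest left ideal containing all of them).\<close>
definition jsocle :: "(nat \<times> nat \<Rightarrow> 'k::field) set" where
  "jsocle = \<Inter>{J. left_ideal J \<and> (\<forall>L. minimal_left_ideal L \<longrightarrow> L \<subseteq> J)}"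

definition poly_in_x :: "'k::field poly \<Rightarrow> (nat \<times> nat \<Rightarrow> 'k)" where
  "poly_in_x p = (\<lambda>(i, j). if i = 0 then coeff p j else 0)"

definition principal_left :: "(nat \<times> nat \<Rightarrow> 'k::field) \<Rightarrow> (nat \<times> nat \<Rightarrow> 'k) set" where
  "principal_left a = {jmul r a | r. r \<in> Jcarrier}"

end

theory Submission
  imports Defs "HOL-Library.Poly_Mapping"
begin



datatype bic = B nat nat

instantiation bic :: monoid_add
begin
definition zero_bic where "0 = B 0 0"
fun plus_bic where "B i j + B k l = (if j \<le> k then B (i+k-j) l else B i (l+j-k))"
instance
proof
  fix a b c :: bic
  show "a + b + c = a + (b + c)"
    by (cases a; cases b; cases c) auto
  show "0 + a = a" by (cases a) (auto simp: zero_bic_def)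
  show "a + 0 = a" by (cases a) (auto simp: zero_bic_def)
qed
end




type_synonym 'k R = "bic \<Rightarrow>\<^sub>0 'k"

definition sc :: "'k::field \<Rightarrow> 'k R" where "sc c = Poly_Mapping.single 0 c"
definition JX :: "'k::field R" where "JX = Poly_Mapping.single (B 0 1) 1"
definition JY :: "'k::field R" where "JY = Poly_Mapping.single (B 1 0) 1"
definition JE :: "'k::field R" where "JE = 1 - JY * JX"

lemma expansion: "(f::'k::field R) = (\<Sum>m\<in>Poly_Mapping.keys f. Poly_Mapping.single m (Poly_Mapping.lookup f m))"
proof (rule poly_mapping_eqI)
  fix k
  have "Poly_Mapping.lookup (\<Sum>m\<in>Poly_Mapping.keys f. Poly_Mapping.single m (Poly_Mapping.lookup f m)) k
      = (\<Sum>m\<in>Poly_Mapping.keys f. if m = k then Poly_Mapping.lookup f m else 0)"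
    unfolding lookup_sum by (auto simp: lookup_single when_def intro: sum.cong)
  also have "\<dots> = Poly_Mapping.lookup f k" by (simp add: in_keys_iff)
  finally show "Poly_Mapping.lookup f k = Poly_Mapping.lookup (\<Sum>m\<in>Poly_Mapping.keys f. Poly_Mapping.single m (Poly_Mapping.lookup f m)) k" by simp
qed

lemma XY: "JX * JY = (1::'k::field R)"
  by (simp add: JX_def JY_def mult_single zero_bic_def[symmetric])

lemma JY_pow: "JY ^ i = (Poly_Mapping.single (B i 0) 1 :: 'k::field R)"
  by (induction i) (simp_all add: JY_def mult_single zero_bic_def[symmetric])

lemma JX_pow: "JX ^ j = (Poly_Mapping.single (B 0 j) 1 :: 'k::field R)"
  by (induction j) (simp_all add: JX_def mult_single zero_bic_def[symmetric])

lemma sc_mult_single: "sc c * Poly_Mapping.single m d = Poly_Mapping.single m (c * d)"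
  by (simp add: sc_def mult_single)

lemma single_mult_sc: "Poly_Mapping.single m d * sc c = Poly_Mapping.single m (d * c)"
  by (simp add: sc_def mult_single)

lemma mono_eq: "Poly_Mapping.single (B i j) c = (sc c * JY ^ i * JX ^ j :: 'k::field R)"
  by (simp add: JY_pow JX_pow sc_def mult_single)

lemma sc_central: "sc c * f = f * (sc c :: 'k::field R)"
proof -
  have "sc c * f = (\<Sum>m\<in>Poly_Mapping.keys f. sc c * Poly_Mapping.single m (Poly_Mapping.lookup f m))"
    by (subst expansion[of f]) (simp add: sum_distrib_left)
  also have "\<dots> = (\<Sum>m\<in>Poly_Mapping.keys f. Poly_Mapping.single m (Poly_Mapping.lookup f m) * sc c)"
    by (simp add: sc_mult_single single_mult_sc mult.commute)
  also have "\<dots> = f * sc c"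
    by (subst (3) expansion[of f]) (simp add: sum_distrib_right)
  finally show ?thesis .
qed

lemma sc_mult: "sc a * sc b = (sc (a * b) :: 'k::field R)"
  by (simp add: sc_def mult_single)
lemma sc_add: "sc a + sc b = (sc (a + b) :: 'k::field R)"
  by (simp add: sc_def single_add)
lemma sc_one[simp]: "sc 1 = (1 :: 'k::field R)"
  by (simp add: sc_def)
lemma sc_zero[simp]: "sc 0 = (0 :: 'k::field R)"
  by (simp add: sc_def)

lemma lookup_sc_mult:
  fixes f :: "'k::field R"
  shows "Poly_Mapping.lookup (sc c * f) k = c * Poly_Mapping.lookup f k"
proof -
  have eq: "sc c * f = (\<Sum>m\<in>Poly_Mapping.keys f. Poly_Mapping.single m (c * Poly_Mapping.lookup f m))"
    by (subst expansion[of f]) (simp add: sum_distrib_left sc_mult_single)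
  have "Poly_Mapping.lookup (\<Sum>m\<in>Poly_Mapping.keys f. Poly_Mapping.single m (c * Poly_Mapping.lookup f m)) k
     = (\<Sum>m\<in>Poly_Mapping.keys f. if m = k then c * Poly_Mapping.lookup f m else 0)"
    unfolding lookup_sum by (auto simp: lookup_single when_def intro: sum.cong)
  also have "\<dots> = c * Poly_Mapping.lookup f k" by (simp add: in_keys_iff)
  finally show ?thesis by (simp only: eq)
qed

lemma JX_JE: "JX * JE = (0::'k::field R)"
  by (simp add: JE_def right_diff_distrib mult.assoc[symmetric] XY)
lemma JE_JY: "JE * JY = (0::'k::field R)"
  by (simp add: JE_def left_diff_distrib mult.assoc XY)
lemma JE_JE: "JE * JE = (JE::'k::field R)"
proof -
  have "JE * JE = JE - JE * JY * JX" by (simp add: JE_def right_diff_distrib mult.assoc)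
  then show ?thesis by (simp add: JE_JY)
qed

lemma XY_pow: "JX ^ n * JY ^ n = (1::'k::field R)"
proof (induction n)
  case (Suc n)
  have "JX ^ Suc n * JY ^ Suc n = (JX ^ n * (JX * JY) * JY ^ n :: 'k R)"
    by (subst power_Suc2[of JX], subst power_Suc[of JY]) (simp only: mult.assoc)
  also have "\<dots> = JX ^ n * JY ^ n" by (simp only: XY mult_1_right)
  also have "\<dots> = 1" by (rule Suc.IH)
  finally show ?case .
qed simp

lemma XkYd_le: "k \<le> d \<Longrightarrow> JX ^ k * JY ^ d = (JY ^ (d - k) :: 'k::field R)"
proof -
  assume "k \<le> d"
  then have "JY ^ d = (JY ^ k * JY ^ (d - k) :: 'k R)" by (simp add: power_add[symmetric])
  then show ?thesis by (simp add: mult.assoc[symmetric] XY_pow)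
qed

lemma XkYd_ge: "d \<le> k \<Longrightarrow> JX ^ k * JY ^ d = (JX ^ (k - d) :: 'k::field R)"
proof -
  assume "d \<le> k"
  then have "JX ^ k = (JX ^ (k - d) * JX ^ d :: 'k R)" by (simp add: power_add[symmetric])
  then show ?thesis by (simp add: mult.assoc XY_pow)
qed

lemma JXpow_JE: "k > 0 \<Longrightarrow> JX ^ k * JE = (0::'k::field R)"
  by (cases k) (simp_all add: power_Suc2 mult.assoc JX_JE del: power_Suc)

lemma JE_JYpow: "k > 0 \<Longrightarrow> JE * JY ^ k = (0::'k::field R)"
  by (cases k) (simp_all add: mult.assoc[symmetric] JE_JY)

lemma telescope: "(\<Sum>i<N. JY ^ i * JE * JX ^ i) + JY ^ N * JX ^ N = (1::'k::field R)"
proof (induction N)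
  case (Suc N)
  have "JY ^ N * JX ^ N = (JY ^ N * JE * JX ^ N + JY ^ Suc N * JX ^ Suc N :: 'k R)"
  proof -
    have "JY ^ Suc N * JX ^ Suc N = (JY ^ N * (JY * JX) * JX ^ N :: 'k R)"
      by (subst power_Suc2[of JY], subst power_Suc[of JX]) (simp only: mult.assoc)
    then show ?thesis by (simp add: JE_def algebra_simps del: power_Suc)
  qed
  then show ?case using Suc by (simp add: add.assoc)
qed simp

lemma EXYE: "JE * JX ^ j * JY ^ i * JE = (if i = j then JE else (0::'k::field R))"
proof (cases "i \<le> j")
  case True
  then have "JE * JX ^ j * JY ^ i * JE = JE * (JX ^ (j - i) * JE)"
    by (simp add: mult.assoc XkYd_ge)
  then show ?thesis using True by (auto simp: JXpow_JE JE_JE)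
next
  case False
  then have "JE * JX ^ j * JY ^ i * JE = (JE * JY ^ (i - j)) * JE"
    by (simp add: mult.assoc XkYd_le)
  then show ?thesis using False by (auto simp: JE_JYpow)
qed




fun ub :: "bic \<Rightarrow> nat \<times> nat" where "ub (B i j) = (i, j)"
definition pb :: "nat \<times> nat \<Rightarrow> bic" where "pb m = B (fst m) (snd m)"
fun rowof :: "bic \<Rightarrow> nat" where "rowof (B i j) = i"

lemma ub_pb[simp]: "ub (pb m) = m" by (cases m) (simp add: pb_def)
lemma pb_ub[simp]: "pb (ub b) = b" by (cases b) (simp add: pb_def)

definition toP :: "(nat \<times> nat \<Rightarrow> 'k::field) \<Rightarrow> 'k R" where
  "toP f = Abs_poly_mapping (f \<circ> ub)"

lemma lookup_toP:
  assumes "f \<in> Jcarrier"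
  shows "Poly_Mapping.lookup (toP f) = f \<circ> ub"
proof -
  have "{m. (f \<circ> ub) m \<noteq> 0} = pb ` jsupp f"
    by (auto simp: jsupp_def image_iff) (metis pb_ub prod.collapse)
  then have "finite {m. (f \<circ> ub) m \<noteq> 0}" using assms by (simp add: Jcarrier_def)
  then show ?thesis by (simp add: toP_def)
qed

lemma poly_in_x_carrier: "poly_in_x p \<in> Jcarrier"
proof -
  have "jsupp (poly_in_x p) \<subseteq> {0} \<times> {..degree p}"
    by (auto simp: jsupp_def poly_in_x_def le_degree split: if_splits)
  then show ?thesis unfolding Jcarrier_def by (auto intro: finite_subset)
qed

lemma sc_comm_left: "a * (sc c * b) = sc c * (a * (b::'k::field R))"
  by (metis mult.assoc sc_central)

lemma mono_eq': "Poly_Mapping.single (B i j) c = (sc c * (JY ^ i * JX ^ j) :: 'k::field R)"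
  by (simp add: mono_eq mult.assoc)

definition px :: "'k::field poly \<Rightarrow> 'k R" where "px p = toP (poly_in_x p)"

lemma lookup_px: "Poly_Mapping.lookup (px p) (B i j) = (if i = 0 then coeff p j else 0)"
  by (simp add: px_def lookup_toP[OF poly_in_x_carrier]) (simp add: poly_in_x_def)

lemma px_eqI: "(\<And>i j. Poly_Mapping.lookup f (B i j) = Poly_Mapping.lookup g (B i j)) \<Longrightarrow> f = g"
  by (rule poly_mapping_eqI) (metis bic.exhaust)

lemma px_add: "px (p + q) = px p + px q"
  by (rule px_eqI) (simp add: lookup_px lookup_add)

lemma px_0[simp]: "px 0 = 0"
  by (rule px_eqI) (simp add: lookup_px)

lemma px_smult: "px (smult a p) = sc a * px p"
  by (rule px_eqI) (simp add: lookup_px lookup_sc_mult)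

lemma px_diff: "px (p - q) = px p - px q"
  by (rule px_eqI) (simp add: lookup_px lookup_minus)

lemma px_monom: "px (monom c n) = Poly_Mapping.single (B 0 n) c"
  by (rule px_eqI) (auto simp: lookup_px lookup_single when_def)

lemma px_monom': "px (monom c n) = sc c * JX ^ n"
  by (simp add: px_monom JX_pow sc_mult_single)

lemma px_sum: "px (\<Sum>i\<in>A. f i) = (\<Sum>i\<in>A. px (f i))"
  by (induction A rule: infinite_finite_induct) (simp_all add: px_add)

lemma px_sum_repr: "degree p \<le> n \<Longrightarrow> px p = (\<Sum>k\<le>n. sc (coeff p k) * JX ^ k)"
proof -
  assume "degree p \<le> n"
  then have "px p = px (\<Sum>i\<le>n. monom (coeff p i) i)" by (simp add: poly_as_sum_of_monoms')
  then show ?thesis by (simp add: px_sum px_monom')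
qed

lemma px_const: "px [:a:] = sc a"
  using px_monom'[of a 0] by (simp add: monom_0)

lemma px_1[simp]: "px 1 = 1"
  using px_const[of 1] by (simp add: one_pCons)

lemma px_pCons: "px (pCons a p) = sc a + JX * px p"
proof -
  define n where "n = degree p"
  have d: "degree (pCons a p) \<le> Suc n" using degree_pCons_le n_def by auto
  have "px (pCons a p) = (\<Sum>k\<le>Suc n. sc (coeff (pCons a p) k) * JX ^ k)"
    using px_sum_repr[OF d] .
  also have "\<dots> = sc a + (\<Sum>k\<le>n. sc (coeff p k) * JX ^ Suc k)"
    by (subst sum.atMost_Suc_shift) (simp del: power_Suc)
  also have "(\<Sum>k\<le>n. sc (coeff p k) * JX ^ Suc k) = (\<Sum>k\<le>n. JX * (sc (coeff p k) * JX ^ k))"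
    by (rule sum.cong) (simp_all add: mult.assoc[symmetric] sc_central[of _ JX])
  also have "\<dots> = JX * px p"
    using px_sum_repr[of p n] by (simp add: n_def sum_distrib_left)
  finally show ?thesis .
qed

lemma px_mult: "px (p * q) = px p * px q"
proof (induction p rule: pCons_induct)
  case (pCons a p)
  have "px (pCons a p * q) = sc a * px q + JX * (px p * px q)"
    by (simp add: px_add px_smult px_pCons pCons.IH)
  also have "\<dots> = px (pCons a p) * px q"
    by (simp add: px_pCons algebra_simps)
  finally show ?case .
qed simp

lemma px_commute: "px p * px q = px q * px p"
  by (metis px_mult mult.commute)

lemma px_JXpow: "JX ^ n = px (monom 1 n)"
  by (simp add: px_monom')

lemma JXpow_px_commute: "JX ^ n * px p = px p * JX ^ n"
  by (simp add: px_JXpow px_commute)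

lemma px_inj: "px p = 0 \<Longrightarrow> p = 0"
proof -
  assume "px p = 0"
  then have "coeff p j = 0" for j
    using lookup_px[of p 0 j] by simp
  then show "p = 0" by (simp add: poly_eq_iff)
qed

lemma JXN_single: "i \<le> N \<Longrightarrow> JX ^ N * Poly_Mapping.single (B i j) c = px (monom c (j + N - i))"
  by (simp add: JX_pow mult_single px_monom)

lemma lemmaA: "\<exists>N\<ge>N0. \<exists>w. JX ^ N * m = px w"
proof -
  define N where "N = Max (insert N0 (rowof ` Poly_Mapping.keys m))"
  have fin: "finite (insert N0 (rowof ` Poly_Mapping.keys m))" by simp
  have N0: "N0 \<le> N" unfolding N_def using fin by simp
  have rows: "rowof k \<le> N" if "k \<in> Poly_Mapping.keys m" for k
    unfolding N_def using fin that by simp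
  define w where "w = (\<Sum>k\<in>Poly_Mapping.keys m. case k of B i j \<Rightarrow> monom (Poly_Mapping.lookup m k) (j + N - i))"
  have "JX ^ N * m = (\<Sum>k\<in>Poly_Mapping.keys m. JX ^ N * Poly_Mapping.single k (Poly_Mapping.lookup m k))"
    by (subst expansion[of m]) (simp add: sum_distrib_left)
  also have "\<dots> = (\<Sum>k\<in>Poly_Mapping.keys m. px (case k of B i j \<Rightarrow> monom (Poly_Mapping.lookup m k) (j + N - i)))"
  proof (rule sum.cong)
    fix k assume k: "k \<in> Poly_Mapping.keys m"
    obtain i j where kij: "k = B i j" by (cases k)
    show "JX ^ N * Poly_Mapping.single k (Poly_Mapping.lookup m k) = px (case k of B i j \<Rightarrow> monom (Poly_Mapping.lookup m k) (j + N - i))"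
      using rows[OF k] kij JXN_single by simp
  qed simp
  also have "\<dots> = px w" by (simp add: w_def px_sum)
  finally show ?thesis using N0 by blast
qed

lemma first_row: "\<exists>w. JE * t = JE * px w"
proof -
  have one: "JE * Poly_Mapping.single k c = JE * px (case k of B i j \<Rightarrow> if i = 0 then monom c j else 0)" for k c
  proof -
    obtain i j where kij: "k = B i j" by (cases k)
    have "JE * Poly_Mapping.single k c = sc c * ((JE * JY ^ i) * JX ^ j)"
      by (simp only: kij mono_eq' sc_comm_left mult.assoc)
    then show ?thesis
      by (cases "i = 0") (simp_all add: kij JE_JYpow px_monom' sc_comm_left)
  qed
  have "JE * t = (\<Sum>k\<in>Poly_Mapping.keys t. JE * Poly_Mapping.single k (Poly_Mapping.lookup t k))"
    by (subst expansion[of t]) (simp add: sum_distrib_left)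
  also have "\<dots> = JE * px (\<Sum>k\<in>Poly_Mapping.keys t. case k of B i j \<Rightarrow> if i = 0 then monom (Poly_Mapping.lookup t k) j else 0)"
    by (simp add: one px_sum sum_distrib_left)
  finally show ?thesis by blast
qed

lemma EmE: "JE * m * JE = sc (Poly_Mapping.lookup m 0) * JE"
proof -
  have one: "JE * Poly_Mapping.single k c * JE = (if k = 0 then sc c * JE else 0)" for k c
  proof -
    obtain i j where kij: "k = B i j" by (cases k)
    have "JE * Poly_Mapping.single k c * JE = sc c * ((JE * JY ^ i) * (JX ^ j * JE))"
      by (simp only: kij mono_eq' sc_comm_left mult.assoc sc_central[of c])
    then show ?thesis
      by (cases "i = 0"; cases "j = 0") (simp_all add: kij JE_JYpow JXpow_JE zero_bic_def JE_JE)
  qed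
  have "JE * m * JE = (\<Sum>k\<in>Poly_Mapping.keys m. JE * Poly_Mapping.single k (Poly_Mapping.lookup m k) * JE)"
    by (subst expansion[of m]) (simp add: sum_distrib_left sum_distrib_right)
  also have "\<dots> = (\<Sum>k\<in>Poly_Mapping.keys m. if k = 0 then sc (Poly_Mapping.lookup m k) * JE else 0)"
    by (simp add: one)
  also have "\<dots> = sc (Poly_Mapping.lookup m 0) * JE"
    by (simp add: in_keys_iff)
  finally show ?thesis .
qed

lemma JE_JXk: "JE * JX ^ k = Poly_Mapping.single (B 0 k) 1 - (Poly_Mapping.single (B 1 (Suc k)) 1 :: 'k::field R)"
proof -
  have "JY * (JX * JX ^ k) = (Poly_Mapping.single (B 1 (Suc k)) 1 :: 'k R)"
  proof -
    have "JY * (JX * JX ^ k) = (JY * JX ^ Suc k :: 'k R)" by simp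
    also have "\<dots> = Poly_Mapping.single (B 1 (Suc k)) 1" by (simp only: JX_pow JY_def mult_single) simp
    finally show ?thesis .
  qed
  then show ?thesis
    by (simp add: JE_def left_diff_distrib mult.assoc JX_pow del: power_Suc)
qed

lemma lookup_JE_JXk: "Poly_Mapping.lookup (JE * JX ^ k :: 'k::field R) (B 0 j) = (if j = k then 1 else 0)"
  by (simp add: JE_JXk lookup_minus lookup_single when_def)

lemma JE_JXk_nz: "JE * JX ^ k \<noteq> (0 :: 'k::field R)"
  using lookup_JE_JXk[of k k] by (metis lookup_zero one_neq_zero)




definition lid :: "'k::field R set \<Rightarrow> bool" where
  "lid A \<longleftrightarrow> 0 \<in> A \<and> (\<forall>a\<in>A. \<forall>b\<in>A. a + b \<in> A) \<and> (\<forall>r. \<forall>a\<in>A. r * a \<in> A)"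

lemma lid_0: "lid A \<Longrightarrow> 0 \<in> A" by (simp add: lid_def)
lemma lid_add: "lid A \<Longrightarrow> a \<in> A \<Longrightarrow> b \<in> A \<Longrightarrow> a + b \<in> A" by (simp add: lid_def)
lemma lid_mult: "lid A \<Longrightarrow> a \<in> A \<Longrightarrow> r * a \<in> A" by (simp add: lid_def)
lemma lid_uminus: "lid A \<Longrightarrow> a \<in> A \<Longrightarrow> - a \<in> A"
  using lid_mult[of A a "- 1"] by simp
lemma lid_diff: "lid A \<Longrightarrow> a \<in> A \<Longrightarrow> b \<in> A \<Longrightarrow> a - b \<in> A"
  using lid_add[of A a "- b"] lid_uminus[of A b] by simp
lemma lid_sum: "lid A \<Longrightarrow> (\<And>i. i \<in> I \<Longrightarrow> f i \<in> A) \<Longrightarrow> sum f I \<in> A"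
  by (induction I rule: infinite_finite_induct) (simp_all add: lid_0 lid_add)

definition Zset :: "'k::field R set" where "Zset = {s. \<exists>N. JX ^ N * s = 0}"

lemma Z_mono: "JX ^ N * s = (0::'k::field R) \<Longrightarrow> N \<le> M \<Longrightarrow> JX ^ M * s = 0"
proof -
  assume a: "JX ^ N * s = 0" "N \<le> M"
  then have "JX ^ M = (JX ^ (M - N) * JX ^ N :: 'k R)" by (simp add: power_add[symmetric])
  then show ?thesis using a by (simp add: mult.assoc)
qed

lemma Z_add: "a \<in> Zset \<Longrightarrow> b \<in> Zset \<Longrightarrow> a + b \<in> Zset"
proof -
  assume "a \<in> Zset" "b \<in> Zset"
  then obtain N M where "JX ^ N * a = 0" "JX ^ M * b = 0" by (auto simp: Zset_def)
  then have "JX ^ (max N M) * a = 0" "JX ^ (max N M) * b = 0" by (auto intro: Z_mono)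
  then have "JX ^ (max N M) * (a + b) = 0" by (simp add: distrib_left)
  then show ?thesis unfolding Zset_def by blast
qed

lemma Z_0: "0 \<in> Zset" by (auto simp: Zset_def)

lemma Z_sum: "(\<And>i. i \<in> I \<Longrightarrow> f i \<in> Zset) \<Longrightarrow> sum f I \<in> Zset"
  by (induction I rule: infinite_finite_induct) (simp_all add: Z_0 Z_add)

lemma Z_right: "s \<in> Zset \<Longrightarrow> s * t \<in> Zset"
  unfolding Zset_def by auto (metis mult.assoc mult_zero_left)

lemma mE_Z: "m * JE \<in> Zset"
proof -
  obtain N w where Nw: "JX ^ N * m = px w" using lemmaA[of 0 m] by blast
  have "JX ^ Suc N * (m * JE) = JX * (JX ^ N * m) * JE" by (simp add: mult.assoc)
  also have "\<dots> = px w * (JX * JE)" using JXpow_px_commute[of 1 w] by (simp add: Nw mult.assoc)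
  also have "\<dots> = 0" by (simp add: JX_JE)
  finally show ?thesis unfolding Zset_def by blast
qed

lemma Z_decomp: "JX ^ N * s = 0 \<Longrightarrow> s = (\<Sum>i<N. JY ^ i * (JE * (JX ^ i * (s::'k::field R))))"
proof -
  assume a: "JX ^ N * s = 0"
  have "s = ((\<Sum>i<N. JY ^ i * JE * JX ^ i) + JY ^ N * JX ^ N) * s" by (simp add: telescope)
  also have "\<dots> = (\<Sum>i<N. JY ^ i * (JE * (JX ^ i * s)))"
    using a by (simp add: distrib_right sum_distrib_right mult.assoc)
  finally show ?thesis .
qed

definition Mk :: "nat \<Rightarrow> 'k::field R set" where "Mk k = {r * (JE * JX ^ k) | r. True}"

lemma lid_Mk: "lid (Mk k :: 'k::field R set)"
  unfolding lid_def Mk_def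
proof (intro conjI ballI allI)
  show "0 \<in> {r * (JE * JX ^ k) |r. True}" by (auto intro: exI[of _ 0])
next
  fix a b :: "'k R" assume "a \<in> {r * (JE * JX ^ k) |r. True}" "b \<in> {r * (JE * JX ^ k) |r. True}"
  then obtain r1 r2 where "a = r1 * (JE * JX ^ k)" "b = r2 * (JE * JX ^ k)" by blast
  then have "a + b = (r1 + r2) * (JE * JX ^ k)" by (simp add: distrib_right)
  then show "a + b \<in> {r * (JE * JX ^ k) |r. True}" by blast
next
  fix r a :: "'k R" assume "a \<in> {r * (JE * JX ^ k) |r. True}"
  then obtain r1 where "a = r1 * (JE * JX ^ k)" by blast
  then have "r * a = (r * r1) * (JE * JX ^ k)" by (simp add: mult.assoc)
  then show "r * a \<in> {r * (JE * JX ^ k) |r. True}" by blast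
qed

lemma Mk_nz: "Mk k \<noteq> ({0} :: 'k::field R set)"
proof
  assume a: "Mk k = ({0} :: 'k R set)"
  have "1 * (JE * JX ^ k) \<in> (Mk k :: 'k R set)" unfolding Mk_def by blast
  then have "JE * JX ^ k = (0::'k R)" using a by simp
  then show False using JE_JXk_nz by blast
qed

lemma Mk_min:
  fixes L :: "'k::field R set"
  assumes L: "lid L" and sub: "L \<subseteq> Mk k" and nz: "L \<noteq> {0}"
  shows "L = Mk k"
proof -
  obtain t where tL: "t \<in> L" and t0: "t \<noteq> 0" using nz lid_0[OF L] by blast
  then obtain r where tr: "t = r * (JE * JX ^ k)" using sub unfolding Mk_def by blast
  have rE: "r * JE \<noteq> 0" using t0 tr by (metis mult.assoc mult_zero_left)
  obtain N where N: "JX ^ N * (r * JE) = 0" using mE_Z[of r] unfolding Zset_def by blast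
  have "\<exists>i. JE * (JX ^ i * r) * JE \<noteq> 0"
  proof (rule ccontr)
    assume "\<not> ?thesis"
    then have "\<forall>i. JY ^ i * (JE * (JX ^ i * (r * JE))) = 0" by (simp add: mult.assoc)
    then have "r * JE = 0" using Z_decomp[OF N] by simp
    then show False using rE by simp
  qed
  then obtain i where i: "JE * (JX ^ i * r) * JE \<noteq> 0" by blast
  define c where "c = Poly_Mapping.lookup (JX ^ i * r) 0"
  have Ec: "JE * (JX ^ i * r) * JE = sc c * JE" using EmE c_def by blast
  then have c0: "c \<noteq> 0" using i by auto
  have "(sc (1 / c) * JE * JX ^ i) * t = sc (1 / c) * (JE * (JX ^ i * r) * JE) * JX ^ k"
    by (simp add: tr mult.assoc)
  also have "\<dots> = sc (1 / c) * (sc c * JE) * JX ^ k" by (simp only: Ec)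
  also have "\<dots> = JE * JX ^ k" using c0 by (simp add: mult.assoc[symmetric] sc_mult)
  finally have EXk: "JE * JX ^ k \<in> L" using lid_mult[OF L tL] by metis
  have "Mk k \<subseteq> L" unfolding Mk_def using lid_mult[OF L EXk] by blast
  then show ?thesis using sub by blast
qed

lemma Z_sub:
  fixes J :: "'k::field R set"
  assumes J: "lid J" and MJ: "\<And>k. Mk k \<subseteq> J"
  shows "Zset \<subseteq> J"
proof
  fix s :: "'k R" assume "s \<in> Zset"
  then obtain N where N: "JX ^ N * s = 0" unfolding Zset_def by blast
  have trm: "JY ^ i * (JE * (JX ^ i * s)) \<in> J" for i
  proof -
    obtain w where w: "JE * (JX ^ i * s) = JE * px w" using first_row by blast
    have "JY ^ i * (JE * px w) = (\<Sum>k\<le>degree w. (sc (coeff w k) * JY ^ i) * (JE * JX ^ k))"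
      by (simp add: px_sum_repr[of w "degree w"] sum_distrib_left sc_comm_left mult.assoc)
    also have "\<dots> \<in> J"
    proof (rule lid_sum[OF J])
      fix k
      have "(sc (coeff w k) * JY ^ i) * (JE * JX ^ k) \<in> Mk k" unfolding Mk_def by blast
      then show "(sc (coeff w k) * JY ^ i) * (JE * JX ^ k) \<in> J" using MJ by blast
    qed
    finally show ?thesis using w by simp
  qed
  have "s = (\<Sum>i<N. JY ^ i * (JE * (JX ^ i * s)))" using Z_decomp[OF N] .
  also have "\<dots> \<in> J" using trm by (intro lid_sum[OF J])
  finally show "s \<in> J" .
qed

lemma JE_px_U:
  assumes "degree p \<le> n"
  shows "JE * px p * (JY ^ d * JX ^ d) = (\<Sum>k\<le>n. if d \<le> k then sc (coeff p k) * (JE * JX ^ k) else (0::'k::field R))"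
proof -
  have "JE * px p * (JY ^ d * JX ^ d) = (\<Sum>k\<le>n. sc (coeff p k) * (JE * (JX ^ k * JY ^ d) * JX ^ d))"
    by (simp add: px_sum_repr[OF assms] sum_distrib_left sum_distrib_right sc_comm_left mult.assoc)
  also have "\<dots> = (\<Sum>k\<le>n. if d \<le> k then sc (coeff p k) * (JE * JX ^ k) else 0)"
  proof (rule sum.cong)
    fix k
    show "sc (coeff p k) * (JE * (JX ^ k * JY ^ d) * JX ^ d) = (if d \<le> k then sc (coeff p k) * (JE * JX ^ k) else 0)"
    proof (cases "d \<le> k")
      case True
      then have "JX ^ (k - d) * JX ^ d = (JX ^ k :: 'k R)" by (simp add: power_add[symmetric])
      then show ?thesis using True by (simp add: XkYd_ge mult.assoc)
    next
      case False
      then show ?thesis by (simp add: XkYd_le JE_JYpow)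
    qed
  qed simp
  finally show ?thesis .
qed

lemma low_U: "degree p < d \<Longrightarrow> JE * px p * (JY ^ d * JX ^ d) = (0::'k::field R)"
  by (simp add: JE_px_U[of p "degree p"])

lemma high_U:
  assumes "JE * px p * (JY ^ d * JX ^ d) = (0::'k::field R)"
  shows "p = 0 \<or> degree p < d"
proof (rule ccontr)
  assume "\<not> (p = 0 \<or> degree p < d)"
  then have p0: "p \<noteq> 0" and dd: "d \<le> degree p" by auto
  have "Poly_Mapping.lookup (JE * px p * (JY ^ d * JX ^ d)) (B 0 (degree p))
     = (\<Sum>x\<le>degree p. if d \<le> x then coeff p x * (if degree p = x then 1 else 0) else 0)"
    by (simp add: JE_px_U[of p "degree p"] lookup_sum lookup_sc_mult lookup_JE_JXk
        if_distrib[of "\<lambda>x. Poly_Mapping.lookup x _"] cong: if_cong)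
  also have "\<dots> = (\<Sum>x\<le>degree p. if x = degree p then coeff p (degree p) else 0)"
    by (rule sum.cong) (auto simp: dd)
  also have "\<dots> = coeff p (degree p)" by simp
  finally have "Poly_Mapping.lookup (JE * px p * (JY ^ d * JX ^ d)) (B 0 (degree p)) = coeff p (degree p)" .
  then have "coeff p (degree p) = 0" using assms by simp
  then show False using p0 by simp
qed




theorem main_R:
  fixes L :: "'k::field R set"
  assumes L: "lid L"
  shows "\<exists>S q. lid S \<and> S \<subseteq> Zset \<and> L = {s + r * px q | s r. s \<in> S} \<and> S \<inter> {r * px q | r. True} = {0}"
proof (cases "\<exists>p. p \<noteq> 0 \<and> px p \<in> L")
  case False
  have "L \<subseteq> Zset"
  proof
    fix f assume f: "f \<in> L"
    obtain N w where Nw: "JX ^ N * f = px w" using lemmaA[of 0 f] by blast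
    have "JX ^ N * f \<in> L" using lid_mult[OF L f] .
    then have "px w \<in> L" by (simp only: Nw)
    then have "w = 0" using False by blast
    then show "f \<in> Zset" using Nw unfolding Zset_def by auto
  qed
  moreover have "L = {s + r * px 0 | s r. s \<in> L}" by auto
  moreover have "L \<inter> {r * px 0 | r. True} = {0}" using lid_0[OF L] by auto
  ultimately show ?thesis using L by blast
next
  case True
  then obtain p0 where "p0 \<noteq> 0 \<and> px p0 \<in> L" by blast
  then obtain q where q: "q \<noteq> 0 \<and> px q \<in> L" and qmin: "\<forall>p. p \<noteq> 0 \<and> px p \<in> L \<longrightarrow> degree q \<le> degree p"
    using ex_has_least_nat[of "\<lambda>p. p \<noteq> 0 \<and> px p \<in> L" p0 degree] by blast
  have q0: "q \<noteq> 0" and qL: "px q \<in> L" using q by auto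
  have qdvd: "q dvd p" if pL: "px p \<in> L" for p
  proof -
    have "p mod q = p - p div q * q" by (simp add: minus_div_mult_eq_mod)
    then have "px (p mod q) = px p - px (p div q) * px q" by (simp add: px_diff px_mult)
    then have mL: "px (p mod q) \<in> L" using lid_diff[OF L pL lid_mult[OF L qL]] by simp
    show ?thesis
    proof (rule ccontr)
      assume "\<not> q dvd p"
      then have m0: "p mod q \<noteq> 0" by (simp add: dvd_eq_mod_eq_0)
      then have "degree (p mod q) < degree q" using degree_mod_less' q0 by blast
      moreover have "degree q \<le> degree (p mod q)" using qmin mL m0 by blast
      ultimately show False by simp
    qed
  qed
  define d where "d = degree q"
  define U :: "'k R" where "U = JY ^ d * JX ^ d"
  define S where "S = {s \<in> L. s * U = 0}"
  have lidS: "lid S"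
    unfolding lid_def
  proof (intro conjI ballI allI)
    show "0 \<in> S" using lid_0[OF L] by (simp add: S_def)
  next
    fix a b assume "a \<in> S" "b \<in> S"
    then show "a + b \<in> S" using lid_add[OF L] by (simp add: S_def distrib_right)
  next
    fix r a assume "a \<in> S"
    then show "r * a \<in> S" using lid_mult[OF L] by (simp add: S_def mult.assoc)
  qed
  have SZ: "S \<subseteq> Zset"
  proof
    fix s assume "s \<in> S"
    then have sU: "s * U = 0" by (simp add: S_def)
    have "s = s * ((\<Sum>i<d. JY ^ i * JE * JX ^ i) + U)" by (simp add: telescope U_def)
    also have "\<dots> = (\<Sum>i<d. s * JY ^ i * JE * JX ^ i)"
      using sU by (simp add: distrib_left sum_distrib_left mult.assoc)
    finally have seq: "s = (\<Sum>i<d. s * JY ^ i * JE * JX ^ i)" .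
    have "(\<Sum>i<d. s * JY ^ i * JE * JX ^ i) \<in> Zset"
      by (rule Z_sum) (rule Z_right, rule mE_Z)
    then show "s \<in> Zset" by (simp only: seq[symmetric])
  qed
  have comp: "{s + r * px q | s r. s \<in> S} \<subseteq> L"
  proof
    fix x assume "x \<in> {s + r * px q | s r. s \<in> S}"
    then obtain s r where "x = s + r * px q" "s \<in> S" by blast
    then show "x \<in> L" using lid_add[OF L _ lid_mult[OF L qL]] by (simp add: S_def)
  qed
  have decomp: "L \<subseteq> {s + r * px q | s r. s \<in> S}"
  proof
    fix f assume f: "f \<in> L"
    obtain N w where Nw: "JX ^ N * f = px w" using lemmaA[of 0 f] by blast
    have "px w \<in> L" using lid_mult[OF L f] Nw by metis
    then obtain g where g: "w = q * g" using qdvd by (auto elim: dvdE)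
    define r0 where "r0 = JY ^ N * px g"
    define s where "s = f - r0 * px q"
    have sL: "s \<in> L" unfolding s_def using lid_diff[OF L f lid_mult[OF L qL]] by simp
    have "JX ^ N * s = JX ^ N * f - (JX ^ N * JY ^ N) * px g * px q"
      by (simp add: s_def r0_def right_diff_distrib mult.assoc)
    also have "\<dots> = 0" by (simp add: Nw XY_pow g px_mult px_commute)
    finally have sN: "JX ^ N * s = 0" .
    have "\<forall>i. \<exists>w. JE * (JX ^ i * s) = JE * px w" using first_row by blast
    from choice[OF this] obtain W where W': "\<forall>i. JE * (JX ^ i * s) = JE * px (W i)" by blast
    then have W: "\<And>i. JE * (JX ^ i * s) = JE * px (W i)" by blast
    have "s = (\<Sum>i<N. JY ^ i * (JE * (JX ^ i * s)))" by (rule Z_decomp[OF sN])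
    also have "\<dots> = (\<Sum>i<N. JY ^ i * (JE * px (W i)))" by (simp only: W)
    finally have s_eq: "s = (\<Sum>i<N. JY ^ i * (JE * px (W i)))" .
    define \<rho> where "\<rho> i = W i mod q" for i
    define G where "G i = W i div q" for i
    have pxW: "px (W i) = px (G i) * px q + px (\<rho> i)" for i
      by (simp add: G_def \<rho>_def px_mult[symmetric] px_add[symmetric])
    have \<rho>L: "JE * px (\<rho> i) \<in> L" for i
    proof -
      have "JE * px (W i) \<in> L" using lid_mult[OF L sL, of "JE * JX ^ i"] W by (simp add: mult.assoc)
      moreover have "JE * px (\<rho> i) = JE * px (W i) - (JE * px (G i)) * px q"
        by (simp add: pxW algebra_simps)
      ultimately show ?thesis using lid_diff[OF L _ lid_mult[OF L qL]] by simp
    qed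
    have \<rho>U: "JE * px (\<rho> i) * U = 0" for i
    proof (cases "\<rho> i = 0")
      case False
      then have "degree (\<rho> i) < d" using degree_mod_less'[OF q0] by (simp add: \<rho>_def d_def)
      then show ?thesis by (simp add: U_def low_U)
    qed simp
    define s1 where "s1 = (\<Sum>i<N. JY ^ i * (JE * px (\<rho> i)))"
    define r1 where "r1 = (\<Sum>i<N. JY ^ i * (JE * px (G i)))"
    have "s = (\<Sum>i<N. JY ^ i * (JE * px (\<rho> i)) + JY ^ i * (JE * px (G i)) * px q)"
      unfolding s_eq by (rule sum.cong) (simp_all add: pxW algebra_simps)
    also have "\<dots> = s1 + r1 * px q"
      by (simp only: s1_def r1_def sum.distrib sum_distrib_right)
    finally have "s = s1 + r1 * px q" .
    moreover have "f = s + r0 * px q" by (simp add: s_def)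
    ultimately have "f = s1 + (r0 + r1) * px q" by (simp add: algebra_simps)
    moreover have "s1 \<in> S"
    proof -
      have "s1 \<in> L" unfolding s1_def by (rule lid_sum[OF L], rule lid_mult[OF L], rule \<rho>L)
      moreover have "s1 * U = 0"
        using \<rho>U by (simp add: s1_def sum_distrib_right mult.assoc)
      ultimately show ?thesis by (simp add: S_def)
    qed
    ultimately show "f \<in> {s + r * px q | s r. s \<in> S}" by blast
  qed
  have inter: "S \<inter> {r * px q | r. True} = {0}"
  proof
    show "{0} \<subseteq> S \<inter> {r * px q | r. True}" using lid_0[OF lidS] by (auto intro: exI[of _ 0])
  next
    show "S \<inter> {r * px q | r. True} \<subseteq> {0}"
    proof
      fix t assume "t \<in> S \<inter> {r * px q | r. True}"
      then obtain r where tS: "t \<in> S" and tr: "t = r * px q" by blast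
      have tU: "t * U = 0" using tS by (simp add: S_def)
      from SZ tS obtain N1 where N1: "JX ^ N1 * t = 0" unfolding Zset_def by blast
      obtain N w where N: "N \<ge> N1" "JX ^ N * r = px w" using lemmaA[of N1 r] by blast
      have "JX ^ N * t = 0" using Z_mono[OF N1 N(1)] .
      then have "px (w * q) = 0" by (simp add: tr px_mult N(2) mult.assoc[symmetric])
      then have "w * q = 0" by (rule px_inj)
      then have "w = 0" using q0 by simp
      then have rN: "JX ^ N * r = 0" using N(2) by simp
      have "\<forall>i. \<exists>w. JE * (JX ^ i * r) = JE * px w" using first_row by blast
      from choice[OF this] obtain V where V': "\<forall>i. JE * (JX ^ i * r) = JE * px (V i)" by blast
      then have V: "\<And>i. JE * (JX ^ i * r) = JE * px (V i)" by blast
      have Vz: "V j = 0" for j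
      proof -
        have "JE * px (V j * q) * U = JE * px (V j) * px q * U" by (simp add: px_mult mult.assoc)
        also have "\<dots> = JE * (JX ^ j * r) * px q * U" by (simp only: V)
        also have "\<dots> = (JE * JX ^ j) * (t * U)" by (simp add: tr mult.assoc)
        also have "\<dots> = 0" by (simp add: tU)
        finally have disj: "V j * q = 0 \<or> degree (V j * q) < d" using high_U unfolding U_def by blast
        show "V j = 0"
        proof (rule ccontr)
          assume nz: "V j \<noteq> 0"
          then have "V j * q \<noteq> 0" using q0 by simp
          moreover have "d \<le> degree (V j * q)" using nz q0 by (simp add: degree_mult_eq d_def)
          ultimately show False using disj by (meson leD)
        qed
      qed
      have "r = (\<Sum>i<N. JY ^ i * (JE * (JX ^ i * r)))" by (rule Z_decomp[OF rN])
      also have "\<dots> = 0" by (simp add: V Vz)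
      finally have "r = 0" .
      then show "t \<in> {0}" using tr by simp
    qed
  qed
  have "L = {s + r * px q | s r. s \<in> S}" using comp decomp by blast
  then show ?thesis using lidS SZ inter by blast
qed




definition frP :: "'k::field R \<Rightarrow> (nat \<times> nat \<Rightarrow> 'k)" where
  "frP g = Poly_Mapping.lookup g \<circ> pb"

lemma pb_inj: "pb a = pb b \<Longrightarrow> a = b"
  by (metis ub_pb)

lemma jsupp_frP: "jsupp (frP g) = ub ` Poly_Mapping.keys g"
  by (auto simp: jsupp_def frP_def in_keys_iff image_iff) (metis in_keys_iff ub_pb)

lemma frP_carrier: "frP g \<in> Jcarrier"
  by (simp add: Jcarrier_def jsupp_frP)

lemma toP_frP[simp]: "toP (frP g) = g"
  by (rule poly_mapping_eqI) (simp add: lookup_toP[OF frP_carrier], simp add: frP_def)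

lemma frP_toP[simp]: "f \<in> Jcarrier \<Longrightarrow> frP (toP f) = f"
  by (simp add: frP_def lookup_toP fun_eq_iff)

lemma frP_inj: "frP a = frP b \<Longrightarrow> a = b"
  by (metis toP_frP)

lemma inj_frP: "inj frP"
  by (auto intro: injI frP_inj)

lemma frP_add: "frP (a + b) = jadd (frP a) (frP b)"
  by (simp add: frP_def jadd_def lookup_add fun_eq_iff)

lemma frP_0: "frP 0 = jzero"
  by (simp add: frP_def jzero_def fun_eq_iff)

lemma pb_plus: "pb (bmul u v) = pb u + pb v"
  by (cases u; cases v) (simp add: bmul_def pb_def)

lemma ub_plus: "ub (m + n) = bmul (ub m) (ub n)"
  by (metis pb_plus pb_ub ub_pb)

lemma lookup_mult_expand:
  fixes a b :: "'k::field R"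
  shows "Poly_Mapping.lookup (a * b) k =
    (\<Sum>m\<in>Poly_Mapping.keys a. \<Sum>n\<in>Poly_Mapping.keys b.
       if m + n = k then Poly_Mapping.lookup a m * Poly_Mapping.lookup b n else (0::'k::field))"
proof -
  have "a * b = (\<Sum>m\<in>Poly_Mapping.keys a. \<Sum>n\<in>Poly_Mapping.keys b.
      Poly_Mapping.single (m + n) (Poly_Mapping.lookup a m * Poly_Mapping.lookup b n))"
    by (subst expansion[of a], subst expansion[of b])
       (simp add: sum_distrib_left sum_distrib_right mult_single, rule sum.swap)
  then show ?thesis
    by (simp add: lookup_sum lookup_single when_def)
qed

lemma frP_mult: "frP (a * b) = jmul (frP a) (frP (b::'k::field R))"
proof
  fix x
  let ?T = "{(m, n). m \<in> jsupp (frP a) \<and> n \<in> jsupp (frP b) \<and> bmul m n = x}"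
  let ?T' = "{(m, n). m \<in> Poly_Mapping.keys a \<and> n \<in> Poly_Mapping.keys b \<and> m + n = pb x}"
  have T: "?T = (\<lambda>(m, n). (ub m, ub n)) ` ?T'"
  proof (rule set_eqI, rule iffI)
    fix z assume "z \<in> ?T"
    then obtain m n where z: "z = (m, n)" "m \<in> jsupp (frP a)" "n \<in> jsupp (frP b)" "bmul m n = x" by blast
    then have "(pb m, pb n) \<in> ?T'"
      using jsupp_frP[of a] jsupp_frP[of b] pb_plus[of m n] by (auto simp: image_iff) 
    moreover have "z = (\<lambda>(m, n). (ub m, ub n)) (pb m, pb n)" using z by simp
    ultimately show "z \<in> (\<lambda>(m, n). (ub m, ub n)) ` ?T'" by blast
  next
    fix z assume "z \<in> (\<lambda>(m, n). (ub m, ub n)) ` ?T'"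
    then obtain p where p: "p \<in> ?T'" "z = (\<lambda>(m, n). (ub m, ub n)) p" by blast
    obtain m n where "p = (m, n)" by (cases p)
    then have z: "z = (ub m, ub n)" "m \<in> Poly_Mapping.keys a" "n \<in> Poly_Mapping.keys b" "m + n = pb x"
      using p by auto
    then show "z \<in> ?T" using jsupp_frP[of a] jsupp_frP[of b] ub_plus[of m n] by auto
  qed
  have inj: "inj_on (\<lambda>(m, n). (ub m, ub n)) ?T'"
    by (auto intro!: inj_onI) (metis pb_ub)+
  have "jmul (frP a) (frP b) x = (\<Sum>(m, n)\<in>?T. frP a m * frP b n)" by (simp add: jmul_def)
  also have "\<dots> = (\<Sum>(m, n)\<in>(\<lambda>(m, n). (ub m, ub n)) ` ?T'. frP a m * frP b n)"
    by (simp only: T)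
  also have "\<dots> = (\<Sum>(m, n)\<in>?T'. Poly_Mapping.lookup a m * Poly_Mapping.lookup b n)"
    by (simp only: sum.reindex[OF inj]) (simp add: comp_def case_prod_beta frP_def)
  also have "\<dots> = (\<Sum>(m, n)\<in>Poly_Mapping.keys a \<times> Poly_Mapping.keys b.
       if m + n = pb x then Poly_Mapping.lookup a m * Poly_Mapping.lookup b n else 0)"
    by (rule sum.mono_neutral_cong_left) (auto split: if_splits)
  also have "\<dots> = Poly_Mapping.lookup (a * b) (pb x)"
    by (simp add: lookup_mult_expand sum.cartesian_product)
  finally show "frP (a * b) x = jmul (frP a) (frP b) x" by (simp add: frP_def)
qed

lemma left_ideal_frP:
  fixes A :: "'k::field R set"
  shows "left_ideal (frP ` A) \<longleftrightarrow> lid A"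
proof
  assume l: "left_ideal (frP ` A)"
  show "lid A" unfolding lid_def
  proof (intro conjI ballI allI)
    have "jzero \<in> frP ` A" using l by (simp add: left_ideal_def)
    then show "0 \<in> A" by (auto simp: frP_0[symmetric] dest: frP_inj)
  next
    fix a b assume "a \<in> A" "b \<in> A"
    then have "jadd (frP a) (frP b) \<in> frP ` A" using l by (simp add: left_ideal_def)
    then show "a + b \<in> A" by (auto simp: frP_add[symmetric] dest: frP_inj)
  next
    fix r a assume "a \<in> A"
    then have "jmul (frP r) (frP a) \<in> frP ` A" using l frP_carrier[of r] unfolding left_ideal_def by blast
    then show "r * a \<in> A" by (auto simp: frP_mult[symmetric] dest: frP_inj)
  qed
next
  assume l: "lid A"
  show "left_ideal (frP ` A)" unfolding left_ideal_def
  proof (intro conjI ballI)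
    show "frP ` A \<subseteq> Jcarrier" using frP_carrier by blast
    have "frP 0 \<in> frP ` A" using lid_0[OF l] by blast
    then show "jzero \<in> frP ` A" by (simp add: frP_0)
  next
    fix a b :: "nat \<times> nat \<Rightarrow> 'k" assume "a \<in> frP ` A" "b \<in> frP ` A"
    then obtain a' b' where "a = frP a'" "b = frP b'" "a' \<in> A" "b' \<in> A" by blast
    then show "jadd a b \<in> frP ` A" using lid_add[OF l] by (metis frP_add image_eqI)
  next
    fix r a :: "nat \<times> nat \<Rightarrow> 'k" assume "r \<in> Jcarrier" "a \<in> frP ` A"
    then obtain a' where "a = frP a'" "a' \<in> A" by blast
    moreover have "r = frP (toP r)" using \<open>r \<in> Jcarrier\<close> by simp
    ultimately show "jmul r a \<in> frP ` A" using lid_mult[OF l] by (metis frP_mult image_eqI)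
  qed
qed

lemma carrier_image: "A \<subseteq> Jcarrier \<Longrightarrow> frP ` (toP ` A) = A"
  by (force simp: image_image)

lemma minimal_Mk: "minimal_left_ideal (frP ` (Mk k :: 'k::field R set))"
  unfolding minimal_left_ideal_def
proof (intro conjI allI impI)
  show "left_ideal (frP ` (Mk k :: 'k R set))" using lid_Mk left_ideal_frP by blast
  show "frP ` (Mk k :: 'k R set) \<noteq> {jzero}"
  proof
    assume "frP ` (Mk k :: 'k R set) = {jzero}"
    then have "frP ` (Mk k :: 'k R set) = frP ` {0}" by (simp add: frP_0)
    then have "Mk k = ({0} :: 'k R set)" using inj_frP by (metis inj_image_eq_iff)
    then show False using Mk_nz by blast
  qed
next
  fix L' :: "(nat \<times> nat \<Rightarrow> 'k) set"
  assume a: "left_ideal L' \<and> L' \<subseteq> frP ` Mk k"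
  then have Lc: "L' \<subseteq> Jcarrier" by (simp add: left_ideal_def)
  then have L'eq: "L' = frP ` (toP ` L')" by (simp add: carrier_image)
  have lidL: "lid (toP ` L')" using a L'eq left_ideal_frP by metis
  have sub: "toP ` L' \<subseteq> Mk k" using a by auto
  show "L' = {jzero} \<or> L' = frP ` Mk k"
  proof (cases "toP ` L' = {0}")
    case True
    then show ?thesis using L'eq by (simp add: frP_0)
  next
    case False
    then have "toP ` L' = Mk k" using Mk_min[OF lidL sub] by blast
    then show ?thesis using L'eq by simp
  qed
qed




theorem theorem2:
  fixes L :: "(nat \<times> nat \<Rightarrow> 'k::field) set"
  assumes "left_ideal L"
  shows "\<exists>S p. left_ideal S \<and> S \<subseteq> jsocle \<and>
           L = {jadd s t | s t. s \<in> S \<and> t \<in> principal_left (poly_in_x p)} \<and>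
           S \<inter> principal_left (poly_in_x p) = {jzero}"
proof -
  have Lc: "L \<subseteq> Jcarrier" using assms by (simp add: left_ideal_def)
  define L' where "L' = toP ` L"
  have LL': "L = frP ` L'" using Lc by (simp add: L'_def carrier_image)
  have lidL': "lid L'" using assms LL' left_ideal_frP by metis
  obtain S' q where S': "lid S'" "S' \<subseteq> Zset" "L' = {s + r * px q | s r. s \<in> S'}"
      "S' \<inter> {r * px q | r. True} = {0}"
    using main_R[OF lidL'] by blast
  have pq: "poly_in_x q = frP (px q)" by (simp add: px_def poly_in_x_carrier)
  have PL: "principal_left (poly_in_x q) = frP ` {r * px q | r. True}"
    unfolding principal_left_def pq
  proof (rule set_eqI, rule iffI)
    fix z assume "z \<in> {jmul r (frP (px q)) |r. r \<in> Jcarrier}"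
    then obtain r where "z = jmul r (frP (px q))" "r \<in> Jcarrier" by blast
    then have "z = frP (toP r * px q)" by (simp add: frP_mult)
    then show "z \<in> frP ` {r * px q |r. True}" by blast
  next
    fix z assume "z \<in> frP ` {r * px q |r. True}"
    then obtain r where "z = frP (r * px q)" by blast
    then have "z = jmul (frP r) (frP (px q))" by (simp add: frP_mult)
    then show "z \<in> {jmul r (frP (px q)) |r. r \<in> Jcarrier}" using frP_carrier by blast
  qed
  define S where "S = frP ` S'"
  have 1: "left_ideal S" using S'(1) left_ideal_frP S_def by metis
  have 2: "S \<subseteq> jsocle"
  proof
    fix x assume "x \<in> S"
    then obtain s where s: "x = frP s" "s \<in> S'" by (auto simp: S_def)
    show "x \<in> jsocle" unfolding jsocle_def
    proof (rule InterI)
      fix J :: "(nat \<times> nat \<Rightarrow> 'k) set" assume "J \<in> {J. left_ideal J \<and> (\<forall>L. minimal_left_ideal L \<longrightarrow> L \<subseteq> J)}"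
      then have J: "left_ideal J" "\<And>L. minimal_left_ideal L \<Longrightarrow> L \<subseteq> J" by auto
      have Jc: "J \<subseteq> Jcarrier" using J(1) by (simp add: left_ideal_def)
      have JJ: "J = frP ` (toP ` J)" using Jc by (simp add: carrier_image)
      have lidJ: "lid (toP ` J)" using J(1) JJ left_ideal_frP by metis
      have "Mk k \<subseteq> toP ` J" for k
      proof
        fix m :: "'k R" assume "m \<in> Mk k"
        then have "frP m \<in> J" using J(2)[OF minimal_Mk[of k]] by blast
        then show "m \<in> toP ` J" by (metis toP_frP image_eqI)
      qed
      then have "Zset \<subseteq> toP ` J" using Z_sub[OF lidJ] by blast
      then have "s \<in> toP ` J" using s S'(2) by blast
      then show "x \<in> J" using s JJ by blast
    qed
  qed
  have 3: "L = {jadd s t | s t. s \<in> S \<and> t \<in> principal_left (poly_in_x q)}"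
  proof -
    have "L = frP ` {s + r * px q | s r. s \<in> S'}" using LL' S'(3) by simp
    also have "\<dots> = {jadd s t | s t. s \<in> S \<and> t \<in> principal_left (poly_in_x q)}"
      unfolding PL S_def
    proof (rule set_eqI, rule iffI)
      fix z assume "z \<in> frP ` {s + r * px q |s r. s \<in> S'}"
      then obtain s r where "z = frP (s + r * px q)" "s \<in> S'" by blast
      then have "z = jadd (frP s) (frP (r * px q))" "frP s \<in> frP ` S'"
        "frP (r * px q) \<in> frP ` {r * px q |r. True}" by (auto simp: frP_add)
      then show "z \<in> {jadd s t |s t. s \<in> frP ` S' \<and> t \<in> frP ` {r * px q |r. True}}" by blast
    next
      fix z assume "z \<in> {jadd s t |s t. s \<in> frP ` S' \<and> t \<in> frP ` {r * px q |r. True}}"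
      then obtain s r where "z = jadd (frP s) (frP (r * px q))" "s \<in> S'" by blast
      then have "z = frP (s + r * px q)" "s \<in> S'" by (auto simp: frP_add)
      then show "z \<in> frP ` {s + r * px q |s r. s \<in> S'}" by blast
    qed
    finally show ?thesis .
  qed
  have 4: "S \<inter> principal_left (poly_in_x q) = {jzero}"
  proof -
    have "S \<inter> principal_left (poly_in_x q) = frP ` (S' \<inter> {r * px q | r. True})"
      unfolding PL S_def by (rule image_Int[OF inj_frP, symmetric])
    also have "\<dots> = {jzero}" using S'(4) by (simp add: frP_0)
    finally show ?thesis .
  qed
  show ?thesis using 1 2 3 4 by blast
qed



end
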